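(* Let $P$ be the Borel probability measure on $\mathbb{R}$ with density $f(x)=(3/2)^m$ if $x\in J_m:=[1-\frac{1}{3^{m-1}},1-\frac{2}{3^m}]$ for some $m\in\mathbb{N}$, and $f(x)=0$ otherwise. Let $n\ge2$ and let $\alpha_n$ be an optimal set of $n$-means for $P$. Then: (i) $\alpha_n\cap J_1\neq\emptyset$ and $\alpha_n\cap[\frac23,1]\neq\emptyset$; (ii) $\alpha_n$ contains no point of the open interval $(\frac13,\frac23)$; (iii) the Voronoi region of any point of $\alpha_n\cap J_1$ contains no point of $[\frac23,1]$, and the Voronoi region of any point of $\alpha_n\cap[\frac23,1]$ contains no point of $J_1$.
   Context: $\mathbb{N}=\{1,2,\dots\}$; note $J_1=[0,\frac13]$ and $J_2=[\frac23,\frac79]$. An optimal set of $n$-means for $P$ is a set $\alpha\subset\mathbb{R}$ with $\mathrm{card}(\alpha)\le n$ attaining $\inf\{\int\min_{a\in\alpha}(x-a)^2\,dP(x):\mathrm{card}(\alpha)\le n\}$. For a finite $\alpha\subset\mathbb{R}$ and $a\in\alpha$, the Voronoi region of $a$ is $M(a|\alpha)=\{x\in\mathbb{R}:|x-a|=\min_{b\in\alpha}|x-b|\}$. *)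

theory Defs
  imports "HOL-Analysis.Analysis" "HOL-Probability.Probability"
begin

definition J :: "nat \<Rightarrow> real set" where
  "J m = {1 - 1 / 3 ^ (m - 1) .. 1 - 2 / 3 ^ m}"

text \<open>The density: (3/2)^m on J_m (m >= 1), 0 elsewhere (the J_m are pairwise disjoint).\<close>
definition dens :: "real \<Rightarrow> real" where
  "dens x = (if \<exists>m\<ge>1. x \<in> J m
             then (3/2) ^ (THE m. m \<ge> 1 \<and> x \<in> J m) else 0)"

definition P :: "real measure" where
  "P = density lborel (\<lambda>x. ennreal (dens x))"

definition cost :: "real set \<Rightarrow> ennreal" where
  "cost \<alpha> = (\<integral>\<^sup>+ x. ennreal (Min ((\<lambda>a. (x - a)\<^sup>2) ` \<alpha>)) \<partial>P)"

definition admissible :: "nat \<Rightarrow> real set \<Rightarrow> bool" where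
  "admissible n \<alpha> \<longleftrightarrow> finite \<alpha> \<and> \<alpha> \<noteq> {} \<and> card \<alpha> \<le> n"

definition optimal_n_means :: "nat \<Rightarrow> real set \<Rightarrow> bool" where
  "optimal_n_means n \<alpha> \<longleftrightarrow> admissible n \<alpha> \<and>
     cost \<alpha> = (INF \<beta>\<in>{\<beta>. admissible n \<beta>}. cost \<beta>)"

definition voronoi :: "real \<Rightarrow> real set \<Rightarrow> real set" where
  "voronoi a \<alpha> = {x. \<bar>x - a\<bar> = Min ((\<lambda>b. \<bar>x - b\<bar>) ` \<alpha>)}"

end

theory Submission
  imports Defs
begin


lemma J_Suc: "J (Suc k) = {1 - 1/3^k .. 1 - 2/3^(Suc k)}" by (simp add: J_def)
lemma J_0[simp]: "J 0 = {}" by (simp add: J_def)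
lemma J_1: "J 1 = {0..1/3}" by (simp add: J_def)
lemma J_2: "J 2 = {2/3..7/9}" by (simp add: J_def)

lemma J_sub: "J m \<subseteq> {0..1}"
proof (cases m)
  case (Suc k)
  have "(1::real)/3^k \<le> 1" by simp
  moreover have "(0::real) < 2/3^(Suc k)" by simp
  ultimately show ?thesis using Suc by (auto simp: J_Suc)
qed simp

lemma J_lt1: "x \<in> J m \<Longrightarrow> x < 1"
proof (cases m)
  case (Suc k)
  assume "x \<in> J m"
  hence "x \<le> 1 - 2/(3*3^k)" using Suc by (simp add: J_Suc)
  moreover have "(0::real) < 2/(3*3^k)" by simp
  ultimately show ?thesis by linarith
qed simp

lemma J_ge2: "m \<ge> 2 \<Longrightarrow> J m \<subseteq> {2/3..1}"
proof -
  assume "m \<ge> 2"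
  then obtain k where k: "m = Suc (Suc k)" by (metis add_2_eq_Suc le_Suc_ex)
  have "(3::real)^(Suc k) \<ge> 3" by (metis One_nat_def Suc_le_mono le0 power_increasing power_one_right zero_less_numeral order_le_less linorder_not_le nat_le_linear le_numeral_extra(3) one_le_numeral)
  hence "(1::real)/3^(Suc k) \<le> 1/3" by (simp add: divide_simps)
  thus ?thesis using k J_sub[of m] by (auto simp: J_Suc)
qed

lemma J_ge3: "m \<ge> 3 \<Longrightarrow> J m \<subseteq> {8/9..1}"
proof -
  assume "m \<ge> 3"
  then obtain k where k: "m = Suc (Suc (Suc k))" by (metis Suc_le_D numeral_3_eq_3 Suc_le_mono)
  have "(3::real)^(Suc (Suc k)) \<ge> 3^2" by (rule power_increasing) auto
  hence "(1::real)/3^(Suc (Suc k)) \<le> 1/9" by (simp add: divide_simps)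
  thus ?thesis using k J_sub[of m] by (auto simp: J_Suc)
qed

lemma J_disj: assumes "x \<in> J m" "x \<in> J k" shows "m = k"
proof (rule ccontr)
  have main: "\<And>m k. x \<in> J m \<Longrightarrow> x \<in> J k \<Longrightarrow> m < k \<Longrightarrow> False"
  proof -
    fix m k assume a: "x \<in> J m" "x \<in> J k" "m < k"
    obtain i where i: "m = Suc i" using a(1) by (cases m) auto
    obtain j where j: "k = Suc j" using a(2) by (cases k) auto
    have ij: "Suc i \<le> j" using a(3) i j by simp
    have "(3::real)^(Suc i) \<le> 3^j" by (rule power_increasing[OF ij]) auto
    hence "(1::real)/3^j \<le> 1/3^(Suc i)" by (simp add: divide_simps)
    moreover have "(1::real)/3^(Suc i) < 2/3^(Suc i)" by (simp add: divide_simps)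
    ultimately show False using a i j by (auto simp: J_Suc)
  qed
  assume "m \<noteq> k"
  thus False using main assms by (metis linorder_neqE_nat)
qed

lemma dens_J: "x \<in> J m \<Longrightarrow> dens x = (3/2)^m"
proof -
  assume a: "x \<in> J m"
  have m: "m \<ge> 1" using a by (cases m) auto
  have "(THE m. m \<ge> 1 \<and> x \<in> J m) = m"
    by (rule the_equality) (use a m J_disj in auto)
  thus ?thesis using a m by (auto simp: dens_def)
qed

lemma dens_0: "(\<And>m. x \<notin> J m) \<Longrightarrow> dens x = 0"
  by (auto simp: dens_def)

lemma dens_nonneg: "dens x \<ge> 0"
  by (auto simp: dens_def)

lemma dens_series: "dens x = (\<Sum>m. (3/2)^m * indicator (J m) x)"
proof (cases "\<exists>m. x \<in> J m")
  case True
  then obtain m where m: "x \<in> J m" by auto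
  have "(\<Sum>m. (3/2)^m * indicator (J m) x) = (\<Sum>k\<in>{m}. (3/2)^k * indicator (J k) x :: real)"
    by (rule suminf_finite) (use m J_disj in \<open>auto simp: indicator_def\<close>)
  thus ?thesis using m dens_J by simp
next
  case False
  thus ?thesis by (simp add: dens_0 indicator_def)
qed

lemma dens_meas[measurable]: "dens \<in> borel_measurable borel"
proof -
  have "(\<lambda>x. \<Sum>m. (3/2)^m * indicator (J m) x :: real) \<in> borel_measurable borel"
    by (intro borel_measurable_suminf) (auto simp: J_def)
  thus ?thesis by (subst dens_series[abs_def]) 
qed

lemma dens_supp: "dens x \<noteq> 0 \<Longrightarrow> x \<in> {0..1/3} \<union> {2/3..1}"
proof -
  assume "dens x \<noteq> 0"
  then obtain m where m: "x \<in> J m" using dens_0 by blast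
  show ?thesis
  proof (cases "m \<ge> 2")
    case True thus ?thesis using m J_ge2 by blast
  next
    case False
    hence "m = 0 \<or> m = 1" by auto
    thus ?thesis using m J_1 by auto
  qed
qed

lemma dens_gap: "x \<in> {1/3<..<2/3} \<union> {7/9<..<8/9} \<Longrightarrow> dens x = 0"
proof (rule dens_0)
  fix m assume x: "x \<in> {1/3<..<2/3} \<union> {7/9<..<8/9}"
  show "x \<notin> J m"
  proof
    assume xm: "x \<in> J m"
    consider "m = 0" | "m = 1" | "m = 2" | "m \<ge> 3" by linarith
    thus False using x xm J_1 J_2 J_ge3[of m] by cases auto
  qed
qed


lemma sets_P[measurable_cong, simp]: "sets P = sets borel"
  by (simp add: P_def)
lemma space_P[simp]: "space P = UNIV"
  by (simp add: P_def)

lemma ennreal_dens_series: "ennreal (dens x) = (\<Sum>m. ennreal ((3/2)^m) * indicator (J m) x)"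
proof (cases "\<exists>m. x \<in> J m")
  case True
  then obtain m where m: "x \<in> J m" by auto
  have "(\<Sum>m. ennreal ((3/2)^m) * indicator (J m) x) = (\<Sum>k\<in>{m}. ennreal ((3/2)^k) * indicator (J k) x)"
    by (rule suminf_finite) (use m J_disj in \<open>auto simp: indicator_def\<close>)
  thus ?thesis using m dens_J by simp
next
  case False
  thus ?thesis by (simp add: dens_0 indicator_def)
qed

lemma nn_P: "f \<in> borel_measurable borel \<Longrightarrow> (\<integral>\<^sup>+x. f x \<partial>P) = (\<integral>\<^sup>+x. ennreal (dens x) * f x \<partial>lborel)"
  unfolding P_def by (subst nn_integral_density) auto

lemma nn_split:
  assumes [measurable]: "h \<in> borel_measurable borel"
  shows "(\<integral>\<^sup>+x. ennreal (dens x) * h x \<partial>lborel) = (\<Sum>m. ennreal ((3/2)^m) * (\<integral>\<^sup>+x. h x * indicator (J m) x \<partial>lborel))"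
proof -
  have "(\<integral>\<^sup>+x. ennreal (dens x) * h x \<partial>lborel) = (\<integral>\<^sup>+x. (\<Sum>m. ennreal ((3/2)^m) * (h x * indicator (J m) x)) \<partial>lborel)"
    by (subst ennreal_dens_series) (simp add: ac_simps)
  also have "\<dots> = (\<Sum>m. (\<integral>\<^sup>+x. ennreal ((3/2)^m) * (h x * indicator (J m) x) \<partial>lborel))"
    by (rule nn_integral_suminf) (auto simp: J_def)
  also have "\<dots> = (\<Sum>m. ennreal ((3/2)^m) * (\<integral>\<^sup>+x. h x * indicator (J m) x \<partial>lborel))"
    by (subst nn_integral_cmult) (auto simp: J_def)
  finally show ?thesis .
qed

lemma nn_FTC:
  fixes f F :: "real \<Rightarrow> real"
  assumes "a \<le> b" "\<And>x. x \<in> {a..b} \<Longrightarrow> (F has_real_derivative f x) (at x)"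
    "\<And>x. x \<in> {a..b} \<Longrightarrow> 0 \<le> f x"
  shows "(\<integral>\<^sup>+x. ennreal (f x) * indicator {a..b} x \<partial>lborel) = ennreal (F b - F a)"
proof (rule nn_integral_has_integral_lebesgue')
  show "(f has_integral F b - F a) {a..b}"
    by (rule fundamental_theorem_of_calculus[OF assms(1)])
       (use assms(2) in \<open>auto simp: has_real_derivative_iff_has_vector_derivative intro: has_vector_derivative_at_within\<close>)
qed (use assms in auto)

lemma J_Suc_len: "(3/2)^(Suc k) * ((1 - 2/3^(Suc k)) - (1 - 1/3^k)) = ((1/2)^(Suc k)::real)"
  by (simp add: field_simps power_mult_distrib[symmetric])

lemma J_Suc_mom: "(3/2)^(Suc k) * (((1 - 2/3^(Suc k))^2 - (1 - 1/3^k)^2)/2) = ((1/2)^(Suc k) - 5/2 * (1/6)^(Suc k)::real)"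
proof -
  have e: "((3::real)/2)^(Suc k) = 3^(Suc k) / 2^(Suc k)" "((1::real)/2)^(Suc k) = 1/2^(Suc k)"
    "((1::real)/6)^(Suc k) = 1/(2^(Suc k)*3^(Suc k))"
    by (simp_all add: power_divide power_mult_distrib[symmetric])
  have p: "(3::real)^(Suc k) = 3*3^k" "(2::real)^(Suc k) = 2*2^k" by simp_all
  have pos: "(0::real) < 3^k" "(0::real) < 2^k" by simp_all
  show ?thesis unfolding e p using pos by (simp add: field_simps power2_eq_square)
qed

lemma mass_term: "ennreal ((3/2)^m) * (\<integral>\<^sup>+x. indicator (J m) x \<partial>lborel) = ennreal (if m = 0 then 0 else (1/2)^m)"
proof (cases m)
  case (Suc k)
  define L where "L = (1 - 2/3^(Suc k)) - (1 - 1/3^k::real)"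
  have L0: "0 \<le> L" unfolding L_def by (simp add: field_simps)
  have "(\<integral>\<^sup>+x. indicator (J m) x \<partial>lborel) = ennreal L"
  proof -
    have "(\<integral>\<^sup>+x. indicator (J m) x \<partial>lborel) = emeasure lborel (J m)"
      by (rule nn_integral_indicator) (simp add: J_def)
    also have "\<dots> = ennreal L" unfolding Suc J_Suc L_def
      by (rule emeasure_lborel_Icc) (use L0 in \<open>unfold L_def, linarith\<close>)
    finally show ?thesis .
  qed
  hence "ennreal ((3/2)^m) * (\<integral>\<^sup>+x. indicator (J m) x \<partial>lborel) = ennreal ((3/2)^m * L)"
    using L0 by (simp add: ennreal_mult)
  also have "(3/2)^m * L = (1/2)^m" unfolding L_def Suc by (rule J_Suc_len)
  finally show ?thesis using Suc by simp
qed simp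

lemma mom_term: "ennreal ((3/2)^m) * (\<integral>\<^sup>+x. ennreal x * indicator (J m) x \<partial>lborel) = ennreal (if m = 0 then 0 else (1/2)^m - 5/2*(1/6)^m)"
proof (cases m)
  case (Suc k)
  have le: "1 - 1/3^k \<le> (1 - 2/3^(Suc k)::real)" by (simp add: field_simps)
  define L where "L = (((1 - 2/3^(Suc k))^2 - (1 - 1/3^k)^2)/(2::real))"
  have "(\<integral>\<^sup>+x. ennreal x * indicator (J m) x \<partial>lborel) = ennreal ((\<lambda>x. x^2/2) (1 - 2/3^(Suc k)) - (\<lambda>x. x^2/2) (1 - 1/3^k))"
    unfolding Suc J_Suc
  proof (rule nn_FTC[OF le])
    fix x assume "x \<in> {1 - 1/3^k .. 1 - 2/3^(Suc k)::real}"
    hence "1 - 1/3^k \<le> x" by auto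
    moreover have "(1::real)/3^k \<le> 1" by simp
    ultimately show "0 \<le> x" by linarith
  qed (auto intro!: derivative_eq_intros)
  hence e: "(\<integral>\<^sup>+x. ennreal x * indicator (J m) x \<partial>lborel) = ennreal L"
    unfolding L_def by (simp add: diff_divide_distrib)
  have L0: "0 \<le> L" unfolding L_def
  proof -
    have "0 \<le> 1 - 1/(3::real)^k" by simp
    hence "(1 - 1/3^k)^2 \<le> (1 - 2/3^(Suc k)::real)^2" using le by (intro power_mono)
    thus "0 \<le> ((1 - 2/3^(Suc k))^2 - (1 - 1/3^k)^2)/(2::real)" by simp
  qed
  have "ennreal ((3/2)^m) * (\<integral>\<^sup>+x. ennreal x * indicator (J m) x \<partial>lborel) = ennreal ((3/2)^m * L)"
    using L0 e by (simp add: ennreal_mult)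
  also have "(3/2)^m * L = (1/2)^m - 5/2*(1/6)^m" unfolding L_def Suc by (rule J_Suc_mom)
  finally show ?thesis using Suc by simp
qed simp


lemma ser_total: "(\<lambda>m. if m = 0 then 0 else (1/2)^m :: real) sums 1"
proof -
  have "(\<lambda>i. (1/2) * (1/2::real)^i) sums ((1/2) * (1 / (1 - 1/2)))"
    by (intro sums_mult geometric_sums) simp
  hence "(\<lambda>i. (\<lambda>m. if m = 0 then 0 else (1/2)^m :: real) (i + 1)) sums 1"
    by simp
  from sums_iff_shift[THEN iffD1, OF this] show ?thesis by simp
qed

lemma ser_mtail: "(\<lambda>m. if 3 \<le> m then (1/2)^m else 0 :: real) sums (1/4)"
proof -
  have "(\<lambda>i. (1/8) * (1/2::real)^i) sums ((1/8) * (1 / (1 - 1/2)))"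
    by (intro sums_mult geometric_sums) simp
  moreover have "(\<lambda>i. (\<lambda>m. if 3 \<le> m then (1/2)^m else 0 :: real) (i + 3)) = (\<lambda>i. (1/8) * (1/2::real)^i)"
    by (simp add: fun_eq_iff power_add eval_nat_numeral)
  ultimately have "(\<lambda>i. (\<lambda>m. if 3 \<le> m then (1/2)^m else 0 :: real) (i + 3)) sums (1/4)" by simp
  from sums_iff_shift[THEN iffD1, OF this] show ?thesis by (simp add: lessThan_nat_numeral)
qed

lemma ser_xtail: "(\<lambda>m. if 3 \<le> m then (1/2)^m - 5/2*(1/6)^m else 0 :: real) sums (17/72)"
proof -
  have "(\<lambda>i. (1/8) * (1/2::real)^i - (5/432) * (1/6)^i) sums ((1/8) * (1 / (1 - 1/2)) - (5/432) * (1 / (1 - 1/6)))"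
    by (intro sums_diff sums_mult geometric_sums) simp_all
  moreover have "(\<lambda>i. (\<lambda>m. if 3 \<le> m then (1/2)^m - 5/2*(1/6)^m else 0 :: real) (i + 3)) = (\<lambda>i. (1/8) * (1/2::real)^i - (5/432) * (1/6)^i)"
    by (simp add: fun_eq_iff power_add eval_nat_numeral)
  ultimately have "(\<lambda>i. (\<lambda>m. if 3 \<le> m then (1/2)^m - 5/2*(1/6)^m else 0 :: real) (i + 3)) sums (17/72)" by simp
  from sums_iff_shift[THEN iffD1, OF this] show ?thesis by (simp add: lessThan_nat_numeral)
qed

lemma ennreal_sums: "(\<And>m. 0 \<le> f m) \<Longrightarrow> f sums s \<Longrightarrow> (\<Sum>m. ennreal (f m)) = ennreal s"
  by (subst suminf_ennreal2) (auto simp: sums_iff)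

lemma dens_total: "(\<integral>\<^sup>+x. ennreal (dens x) \<partial>lborel) = 1"
proof -
  have "(\<integral>\<^sup>+x. ennreal (dens x) \<partial>lborel) = (\<integral>\<^sup>+x. ennreal (dens x) * 1 \<partial>lborel)" by simp
  also have "\<dots> = (\<Sum>m. ennreal (if m = 0 then 0 else (1/2)^m))"
    by (subst nn_split) (auto simp: mass_term)
  also have "\<dots> = ennreal 1" by (rule ennreal_sums[OF _ ser_total]) auto
  finally show ?thesis by simp
qed

lemma ind_tail: "indicator {8/9..1} x * indicator (J m) x = (if 3 \<le> m then indicator (J m) x else (0::ennreal))"
proof (cases "3 \<le> m")
  case True thus ?thesis using J_ge3[of m] by (auto simp: indicator_def)
next
  case False
  hence "m = 0 \<or> m = 1 \<or> m = 2" by auto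
  thus ?thesis using False J_1 J_2 by (auto simp: indicator_def)
qed

lemma dens_mtail: "(\<integral>\<^sup>+x. ennreal (dens x) * indicator {8/9..1} x \<partial>lborel) = ennreal (1/4)"
proof -
  have "(\<integral>\<^sup>+x. ennreal (dens x) * indicator {8/9..1} x \<partial>lborel) = (\<Sum>m. ennreal (if 3 \<le> m then (1/2)^m else 0))"
  proof (subst nn_split, simp, intro suminf_cong)
    fix m
    have "(\<integral>\<^sup>+x. indicator {8/9..1} x * indicator (J m) x \<partial>lborel) = (if 3 \<le> m then (\<integral>\<^sup>+x. indicator (J m) x \<partial>lborel) else 0)"
      by (subst ind_tail) auto
    thus "ennreal ((3/2)^m) * (\<integral>\<^sup>+x. indicator {8/9..1} x * indicator (J m) x \<partial>lborel) = ennreal (if 3 \<le> m then (1/2)^m else 0)"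
      using mass_term[of m] by auto
  qed
  also have "\<dots> = ennreal (1/4)" by (rule ennreal_sums[OF _ ser_mtail]) auto
  finally show ?thesis .
qed

lemma dens_xtail: "(\<integral>\<^sup>+x. ennreal (dens x) * (ennreal x * indicator {8/9..1} x) \<partial>lborel) = ennreal (17/72)"
proof -
  have "(\<integral>\<^sup>+x. ennreal (dens x) * (ennreal x * indicator {8/9..1} x) \<partial>lborel) = (\<Sum>m. ennreal (if 3 \<le> m then (1/2)^m - 5/2*(1/6)^m else 0))"
  proof (subst nn_split, simp, intro suminf_cong)
    fix m
    have "(\<integral>\<^sup>+x. ennreal x * indicator {8/9..1} x * indicator (J m) x \<partial>lborel) = (if 3 \<le> m then (\<integral>\<^sup>+x. ennreal x * indicator (J m) x \<partial>lborel) else 0)"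
      by (subst mult.assoc, subst ind_tail) auto
    thus "ennreal ((3/2)^m) * (\<integral>\<^sup>+x. ennreal x * indicator {8/9..1} x * indicator (J m) x \<partial>lborel) = ennreal (if 3 \<le> m then (1/2)^m - 5/2*(1/6)^m else 0)"
      using mom_term[of m] by auto
  qed
  also have "\<dots> = ennreal (17/72)"
  proof (rule ennreal_sums[OF _ ser_xtail])
    fix m :: nat
    have "(1/6::real)^m \<le> (1/2)^m" by (rule power_mono) auto
    have h3: "(1/6::real)^m * 3 \<le> (1/2)^m" if "3 \<le> m"
    proof -
      have "(1/6::real)^m * 3^m = (1/2)^m" by (simp add: power_mult_distrib[symmetric])
      moreover have "(3::real) \<le> 3^m" using that by (metis power_increasing power_one_right le_trans one_le_numeral numeral_le_iff semiring_norm(72) Suc_leD numeral_3_eq_3)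
      moreover have "(0::real) \<le> (1/6)^m" by simp
      ultimately show ?thesis by (metis mult_left_mono)
    qed
    have h0: "(0::real) \<le> (1/6)^m" by simp
    show "0 \<le> (if 3 \<le> m then (1/2)^m - 5/2*(1/6)^m else 0 :: real)"
    proof (cases "3 \<le> m")
      case True
      have "0 \<le> (1/2::real)^m - 5/2*(1/6)^m" using h3[OF True] h0 by linarith
      thus ?thesis using True by simp
    qed simp
  qed
  finally show ?thesis .
qed


lemma dens_integrable: "integrable lborel dens"
  by (rule integrableI_nonneg) (auto simp: dens_nonneg dens_total)

lemma integrable_densf:
  assumes [measurable]: "f \<in> borel_measurable borel" and b: "\<And>x. x \<in> {0..1} \<Longrightarrow> \<bar>f x\<bar> \<le> C"
  shows "integrable lborel (\<lambda>x. dens x * f x)"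
proof (rule Bochner_Integration.integrable_bound[where f="\<lambda>x. C * dens x"])
  show "integrable lborel (\<lambda>x. C * dens x)" using dens_integrable by simp
  show "AE x in lborel. norm (dens x * f x) \<le> norm (C * dens x)"
  proof (rule AE_I2)
    fix x
    show "norm (dens x * f x) \<le> norm (C * dens x)"
    proof (cases "dens x = 0")
      case False
      have x: "x \<in> {0..1}" using dens_supp[OF False] by auto
      have "\<bar>dens x * f x\<bar> = dens x * \<bar>f x\<bar>" using dens_nonneg by (simp add: abs_mult)
      also have "\<dots> \<le> dens x * C" using b[OF x] dens_nonneg by (simp add: mult_left_mono)
      also have "\<dots> \<le> \<bar>C * dens x\<bar>" by (simp add: mult.commute)
      finally show ?thesis by simp
    qed simp
  qed
qed simp

lemma integral_mtail: "(\<integral>x. dens x * indicator {8/9..1} x \<partial>lborel) = 1/4"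
proof -
  have i: "integrable lborel (\<lambda>x. dens x * indicator {8/9..1} x)"
    by (rule integrable_densf[where C=1]) (auto simp: indicator_def)
  have "ennreal (\<integral>x. dens x * indicator {8/9..1} x \<partial>lborel) = (\<integral>\<^sup>+x. ennreal (dens x * indicator {8/9..1} x) \<partial>lborel)"
    by (rule nn_integral_eq_integral[OF i, symmetric]) (auto simp: dens_nonneg)
  also have "\<dots> = (\<integral>\<^sup>+x. ennreal (dens x) * indicator {8/9..1} x \<partial>lborel)"
    by (intro nn_integral_cong) (auto simp: indicator_def)
  finally have "ennreal (\<integral>x. dens x * indicator {8/9..1} x \<partial>lborel) = ennreal (1/4)"
    using dens_mtail by simp
  moreover have "0 \<le> (\<integral>x. dens x * indicator {8/9..1} x \<partial>lborel)"
    by (rule integral_nonneg_AE) (auto simp: dens_nonneg)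
  ultimately show ?thesis by simp
qed

lemma integral_xtail: "(\<integral>x. dens x * (x * indicator {8/9..1} x) \<partial>lborel) = 17/72"
proof -
  have i: "integrable lborel (\<lambda>x. dens x * (x * indicator {8/9..1} x))"
    by (rule integrable_densf[where C=1]) (auto simp: indicator_def)
  have nn: "\<And>x. 0 \<le> dens x * (x * indicator {8/9..1} x)"
    using dens_nonneg by (auto simp: indicator_def)
  have "ennreal (\<integral>x. dens x * (x * indicator {8/9..1} x) \<partial>lborel) = (\<integral>\<^sup>+x. ennreal (dens x * (x * indicator {8/9..1} x)) \<partial>lborel)"
    by (rule nn_integral_eq_integral[OF i, symmetric]) (auto simp: nn)
  also have "\<dots> = (\<integral>\<^sup>+x. ennreal (dens x) * (ennreal x * indicator {8/9..1} x) \<partial>lborel)"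
    by (intro nn_integral_cong) (auto simp: indicator_def ennreal_mult dens_nonneg)
  finally have "ennreal (\<integral>x. dens x * (x * indicator {8/9..1} x) \<partial>lborel) = ennreal (17/72)"
    using dens_xtail by simp
  moreover have "0 \<le> (\<integral>x. dens x * (x * indicator {8/9..1} x) \<partial>lborel)"
    by (rule integral_nonneg_AE) (auto simp: nn)
  ultimately show ?thesis by simp
qed

lemma integrable_P: "f \<in> borel_measurable borel \<Longrightarrow> integrable P f \<longleftrightarrow> integrable lborel (\<lambda>x. dens x * f x)"
  unfolding P_def by (subst integrable_density) (auto simp: dens_nonneg)

lemma integral_P: "f \<in> borel_measurable borel \<Longrightarrow> integral\<^sup>L P f = (\<integral>x. dens x * f x \<partial>lborel)"
  unfolding P_def by (subst integral_density) (auto simp: dens_nonneg)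


definition Dst :: "real set \<Rightarrow> real \<Rightarrow> real" where
  "Dst \<alpha> x = Min ((\<lambda>b. \<bar>x - b\<bar>) ` \<alpha>)"

context fixes \<alpha> :: "real set" assumes fin: "finite \<alpha>" and ne: "\<alpha> \<noteq> {}"
begin

lemma Dst_le: "b \<in> \<alpha> \<Longrightarrow> Dst \<alpha> x \<le> \<bar>x - b\<bar>"
  unfolding Dst_def using fin by (intro Min_le) auto

lemma Dst_ex: "\<exists>b\<in>\<alpha>. Dst \<alpha> x = \<bar>x - b\<bar>"
proof -
  have "Min ((\<lambda>b. \<bar>x - b\<bar>) ` \<alpha>) \<in> (\<lambda>b. \<bar>x - b\<bar>) ` \<alpha>"
    using fin ne by (intro Min_in) auto
  thus ?thesis unfolding Dst_def by auto
qed

lemma Dst_ge: "(\<And>b. b \<in> \<alpha> \<Longrightarrow> c \<le> \<bar>x - b\<bar>) \<Longrightarrow> c \<le> Dst \<alpha> x"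
  using Dst_ex[of x] by force

lemma Dst_nonneg: "0 \<le> Dst \<alpha> x"
  using Dst_ex[of x] by force

lemma Dst_infdist: "Dst \<alpha> x = infdist x \<alpha>"
proof -
  have "infdist x \<alpha> = Inf (dist x ` \<alpha>)" using ne by (simp add: infdist_def)
  also have "\<dots> = Min (dist x ` \<alpha>)" using fin ne by (intro cInf_eq_Min) auto
  finally show ?thesis by (simp add: Dst_def dist_real_def)
qed

lemma Dst_cont: "continuous_on UNIV (Dst \<alpha>)"
  unfolding Dst_infdist[abs_def] by (intro continuous_intros)

lemma Dst_meas[measurable]: "Dst \<alpha> \<in> borel_measurable borel"
  by (rule borel_measurable_continuous_onI[OF Dst_cont])

lemma Dst_lip: "Dst \<alpha> x \<le> Dst \<alpha> y + \<bar>x - y\<bar>"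
proof -
  obtain b where b: "b \<in> \<alpha>" "Dst \<alpha> y = \<bar>y - b\<bar>" using Dst_ex by blast
  have "Dst \<alpha> x \<le> \<bar>x - b\<bar>" by (rule Dst_le[OF b(1)])
  also have "\<dots> \<le> \<bar>y - b\<bar> + \<bar>x - y\<bar>" by simp
  finally show ?thesis using b by simp
qed

lemma Min_sq: "Min ((\<lambda>a. (x - a)\<^sup>2) ` \<alpha>) = (Dst \<alpha> x)\<^sup>2"
proof (rule Min_eqI)
  show "finite ((\<lambda>a. (x - a)\<^sup>2) ` \<alpha>)" using fin by simp
  fix y assume "y \<in> (\<lambda>a. (x - a)\<^sup>2) ` \<alpha>"
  then obtain a where a: "a \<in> \<alpha>" "y = (x - a)\<^sup>2" by auto
  have "(Dst \<alpha> x)\<^sup>2 \<le> \<bar>x - a\<bar>\<^sup>2" using Dst_le[OF a(1)] Dst_nonneg by (intro power_mono) auto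
  thus "(Dst \<alpha> x)\<^sup>2 \<le> y" using a by simp
next
  obtain b where b: "b \<in> \<alpha>" "Dst \<alpha> x = \<bar>x - b\<bar>" using Dst_ex by blast
  thus "(Dst \<alpha> x)\<^sup>2 \<in> (\<lambda>a. (x - a)\<^sup>2) ` \<alpha>" by auto
qed

lemma Dst_bound: "x \<in> {0..1} \<Longrightarrow> \<bar>(Dst \<alpha> x)\<^sup>2\<bar> \<le> (1 + \<bar>SOME b. b \<in> \<alpha>\<bar>)\<^sup>2"
proof -
  assume x: "x \<in> {0..1}"
  define b where "b = (SOME b. b \<in> \<alpha>)"
  have b: "b \<in> \<alpha>" unfolding b_def using ne by (simp add: some_in_eq)
  have "Dst \<alpha> x \<le> \<bar>x - b\<bar>" by (rule Dst_le[OF b])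
  also have "\<dots> \<le> 1 + \<bar>b\<bar>" using x by auto
  finally have "(Dst \<alpha> x)\<^sup>2 \<le> (1 + \<bar>b\<bar>)\<^sup>2" using Dst_nonneg by (intro power_mono) auto
  thus ?thesis unfolding b_def by simp
qed

lemma integrable_cost: "integrable lborel (\<lambda>x. dens x * (Dst \<alpha> x)\<^sup>2)"
  by (rule integrable_densf[OF _ Dst_bound]) auto

definition "Cr = (\<integral>x. dens x * (Dst \<alpha> x)\<^sup>2 \<partial>lborel)"

lemma Cr_nonneg: "0 \<le> Cr"
  unfolding Cr_def by (rule integral_nonneg_AE) (auto simp: dens_nonneg)

lemma cost_Cr: "cost \<alpha> = ennreal Cr"
proof -
  have "cost \<alpha> = (\<integral>\<^sup>+x. ennreal ((Dst \<alpha> x)\<^sup>2) \<partial>P)"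
    unfolding cost_def Min_sq ..
  also have "\<dots> = (\<integral>\<^sup>+x. ennreal (dens x) * ennreal ((Dst \<alpha> x)\<^sup>2) \<partial>lborel)"
    by (rule nn_P) simp
  also have "\<dots> = (\<integral>\<^sup>+x. ennreal (dens x * (Dst \<alpha> x)\<^sup>2) \<partial>lborel)"
    by (intro nn_integral_cong) (simp add: ennreal_mult dens_nonneg)
  also have "\<dots> = ennreal Cr" unfolding Cr_def
    by (rule nn_integral_eq_integral[OF integrable_cost]) (auto simp: dens_nonneg)
  finally show ?thesis .
qed

end

lemma adm_fin: "admissible n \<alpha> \<Longrightarrow> finite \<alpha>" by (simp add: admissible_def)
lemma adm_ne: "admissible n \<alpha> \<Longrightarrow> \<alpha> \<noteq> {}" by (simp add: admissible_def)

lemma opt_le: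
  assumes opt: "optimal_n_means n \<alpha>" and adm: "admissible n \<beta>"
  shows "Cr \<alpha> \<le> Cr \<beta>"
proof -
  have a: "admissible n \<alpha>" using opt by (simp add: optimal_n_means_def)
  have "cost \<alpha> \<le> cost \<beta>" using opt adm unfolding optimal_n_means_def
    by (auto intro: INF_lower)
  thus ?thesis using cost_Cr[OF adm_fin[OF a] adm_ne[OF a]] cost_Cr[OF adm_fin[OF adm] adm_ne[OF adm]]
      Cr_nonneg[OF adm_fin[OF adm] adm_ne[OF adm]] by simp
qed


lemma opt_adm: "optimal_n_means n \<alpha> \<Longrightarrow> admissible n \<alpha>" by (simp add: optimal_n_means_def)

lemma improve:
  assumes opt: "optimal_n_means n \<alpha>" and adm: "admissible n \<beta>"
   and le: "\<And>x. x \<in> {0..1/3} \<union> {2/3..1} \<Longrightarrow> Dst \<beta> x \<le> Dst \<alpha> x"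
   and uv: "u < v" "{u..v} \<subseteq> J m"
   and lt: "\<And>x. x \<in> {u<..<v} \<Longrightarrow> Dst \<beta> x < Dst \<alpha> x"
  shows False
proof -
  have a: "admissible n \<alpha>" using opt by (rule opt_adm)
  note fa = adm_fin[OF a] adm_ne[OF a] and fb = adm_fin[OF adm] adm_ne[OF adm]
  define f where "f x = dens x * (Dst \<alpha> x)\<^sup>2 - dens x * (Dst \<beta> x)\<^sup>2" for x
  have intf: "integrable lborel f" unfolding f_def
    by (intro Bochner_Integration.integrable_diff integrable_cost fa fb)
  have fnn: "0 \<le> f x" for x
  proof (cases "dens x = 0")
    case False
    hence "x \<in> {0..1/3} \<union> {2/3..1}" using dens_supp by auto
    hence "(Dst \<beta> x)\<^sup>2 \<le> (Dst \<alpha> x)\<^sup>2" using le Dst_nonneg[OF fb] by (intro power_mono) auto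
    thus ?thesis unfolding f_def using dens_nonneg[of x] 
      by (simp add: right_diff_distrib[symmetric] mult_nonneg_nonneg)
  qed (simp add: f_def)
  have "integral\<^sup>L lborel f = Cr \<alpha> - Cr \<beta>"
    unfolding f_def Cr_def[OF fa] Cr_def[OF fb]
    by (intro Bochner_Integration.integral_diff integrable_cost fa fb)
  also have "\<dots> \<le> 0" using opt_le[OF opt adm] by simp
  moreover have "0 \<le> integral\<^sup>L lborel f" by (rule integral_nonneg_AE) (simp add: fnn)
  ultimately have "integral\<^sup>L lborel f = 0" by linarith
  hence ae: "AE x in lborel. f x = 0"
    using integral_nonneg_eq_0_iff_AE[OF intf] fnn by simp
  have "AE x in lborel. x \<notin> {u<..<v}"
  proof (rule AE_mp[OF ae], rule AE_I2, rule impI)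
    fix x assume fx: "f x = 0"
    show "x \<notin> {u<..<v}"
    proof
      assume x: "x \<in> {u<..<v}"
      hence "x \<in> J m" using uv by auto
      hence d: "dens x > 0" using dens_J by simp
      have "(Dst \<beta> x)\<^sup>2 < (Dst \<alpha> x)\<^sup>2" using lt[OF x] Dst_nonneg[OF fb]
        by (intro power_strict_mono) auto
      hence "dens x * (Dst \<beta> x)\<^sup>2 < dens x * (Dst \<alpha> x)\<^sup>2" using d by simp
      thus False using fx unfolding f_def by simp
    qed
  qed
  hence "emeasure lborel {u<..<v} = 0"
    by (subst (asm) AE_iff_measurable[of "{u<..<v}"]) auto
  thus False using uv by simp
qed

lemma voronoi_Dst: "voronoi b \<alpha> = {x. \<bar>x - b\<bar> = Dst \<alpha> x}"
  by (simp add: voronoi_def Dst_def)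

lemma move:
  assumes opt: "optimal_n_means n \<alpha>" and b: "b \<in> \<alpha>"
   and I: "(\<integral>x. dens x * ((x - b) * indicator (voronoi b \<alpha>) x) \<partial>lborel) \<noteq> 0"
  shows False
proof -
  have a: "admissible n \<alpha>" using opt by (rule opt_adm)
  note fa = adm_fin[OF a] adm_ne[OF a]
  define V where "V = voronoi b \<alpha>"
  have V: "V = {x. \<bar>x - b\<bar> = Dst \<alpha> x}" unfolding V_def by (rule voronoi_Dst)
  have Vm[measurable]: "V \<in> sets borel" unfolding V using Dst_meas[OF fa] by measurable
  define Iv where "Iv = (\<integral>x. dens x * ((x - b) * indicator V x) \<partial>lborel)"
  define M where "M = (\<integral>x. dens x * indicator V x \<partial>lborel)"
  have M0: "0 \<le> M" unfolding M_def by (rule integral_nonneg_AE) (auto simp: dens_nonneg)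
  have Iv0: "Iv \<noteq> 0" using I unfolding Iv_def V_def .
  define e where "e = Iv / (M + 1)"
  define \<beta> where "\<beta> = insert (b + e) (\<alpha> - {b})"
  have fb: "finite \<beta>" "\<beta> \<noteq> {}" unfolding \<beta>_def using fa by auto
  have "card \<beta> \<le> card (\<alpha> - {b}) + 1" unfolding \<beta>_def using fa by (simp add: card_insert_le_m1 card_insert_if)
  also have "\<dots> = card \<alpha>"
  proof -
    have "card \<alpha> > 0" using fa by (auto simp: card_gt_0_iff)
    thus ?thesis using fa b by simp
  qed
  finally have adm: "admissible n \<beta>" using a fb unfolding admissible_def by auto
  define g where "g x = dens x * (Dst \<alpha> x)\<^sup>2 + dens x * (indicator V x * (e^2 - 2 * e * (x - b)))" for x
  have pt: "dens x * (Dst \<beta> x)\<^sup>2 \<le> g x" for x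
  proof -
    have "(Dst \<beta> x)\<^sup>2 \<le> (Dst \<alpha> x)\<^sup>2 + indicator V x * (e^2 - 2 * e * (x - b))"
    proof (cases "x \<in> V")
      case True
      hence D: "Dst \<alpha> x = \<bar>x - b\<bar>" unfolding V by simp
      have "Dst \<beta> x \<le> \<bar>x - (b + e)\<bar>" by (rule Dst_le[OF fb]) (simp add: \<beta>_def)
      hence "(Dst \<beta> x)\<^sup>2 \<le> \<bar>x - (b + e)\<bar>\<^sup>2" using Dst_nonneg[OF fb] by (intro power_mono) auto
      also have "\<dots> = (Dst \<alpha> x)\<^sup>2 + indicator V x * (e^2 - 2 * e * (x - b))"
        using True D by (simp add: power2_eq_square algebra_simps)
      finally show ?thesis .
    next
      case False
      obtain b' where b': "b' \<in> \<alpha>" "Dst \<alpha> x = \<bar>x - b'\<bar>" using Dst_ex[OF fa] by blast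
      have "b' \<noteq> b" using False b' unfolding V by auto
      hence "b' \<in> \<beta>" using b' unfolding \<beta>_def by auto
      hence "Dst \<beta> x \<le> Dst \<alpha> x" using b' Dst_le[OF fb] by simp
      hence "(Dst \<beta> x)\<^sup>2 \<le> (Dst \<alpha> x)\<^sup>2" using Dst_nonneg[OF fb] by (intro power_mono) auto
      thus ?thesis using False by simp
    qed
    thus ?thesis unfolding g_def using dens_nonneg[of x]
      by (metis distrib_left mult_left_mono)
  qed
  have i1: "integrable lborel (\<lambda>x. dens x * (indicator V x * (e^2 - 2 * e * (x - b))))"
    by (rule integrable_densf[where C="e^2 + 2*\<bar>e\<bar>*(1 + \<bar>b\<bar>)"]) (auto simp: indicator_def abs_mult intro!: order_trans[OF abs_triangle_ineq4] mult_left_mono)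
  have iV: "integrable lborel (\<lambda>x. dens x * indicator V x)"
    by (rule integrable_densf[where C=1]) (auto simp: indicator_def)
  have iI: "integrable lborel (\<lambda>x. dens x * ((x - b) * indicator V x))"
    by (rule integrable_densf[where C="1 + \<bar>b\<bar>"]) (auto simp: indicator_def)
  have "Cr \<beta> \<le> integral\<^sup>L lborel g" unfolding Cr_def[OF fb]
    by (rule integral_mono[OF integrable_cost[OF fb] _ pt]) (unfold g_def, intro Bochner_Integration.integrable_add integrable_cost fa i1)
  also have "integral\<^sup>L lborel g = Cr \<alpha> + (\<integral>x. dens x * (indicator V x * (e^2 - 2 * e * (x - b))) \<partial>lborel)"
    unfolding g_def Cr_def[OF fa] by (rule Bochner_Integration.integral_add[OF integrable_cost[OF fa] i1])
  also have "(\<integral>x. dens x * (indicator V x * (e^2 - 2 * e * (x - b))) \<partial>lborel)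
      = (\<integral>x. e^2 * (dens x * indicator V x) - (2 * e) * (dens x * ((x - b) * indicator V x)) \<partial>lborel)"
    by (intro Bochner_Integration.integral_cong) (auto simp: algebra_simps)
  also have "\<dots> = e^2 * M - 2 * e * Iv" unfolding M_def Iv_def
    using iV iI by simp
  finally have "Cr \<beta> \<le> Cr \<alpha> + (e^2 * M - 2 * e * Iv)" .
  moreover have "e^2 * M - 2 * e * Iv < 0"
  proof -
    have "M + 1 \<noteq> 0" using M0 by linarith
    hence e1: "Iv = e * (M + 1)" unfolding e_def by simp
    hence "e \<noteq> 0" using Iv0 by auto
    hence "e^2 > 0" by simp
    moreover have "e^2 * M - 2 * e * Iv = - (e^2 * (M + 2))" unfolding e1 by (simp add: power2_eq_square algebra_simps)
    moreover have "M + 2 > 0" using M0 by simp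
    ultimately show ?thesis by simp
  qed
  ultimately show False using opt_le[OF opt adm] by simp
qed


abbreviation "SS \<equiv> {0..1/3} \<union> {2/3..(1::real)}"

lemma adm_repl: "admissible n \<alpha> \<Longrightarrow> b \<in> \<alpha> \<Longrightarrow> admissible n (insert c (\<alpha> - {b}))"
proof -
  assume a: "admissible n \<alpha>" and b: "b \<in> \<alpha>"
  note fa = adm_fin[OF a] adm_ne[OF a]
  have "card (insert c (\<alpha> - {b})) \<le> card (\<alpha> - {b}) + 1" using fa by (simp add: card_insert_if)
  also have "\<dots> = card \<alpha>"
  proof -
    have "card \<alpha> > 0" using fa by (auto simp: card_gt_0_iff)
    thus ?thesis using fa b by simp
  qed
  finally show ?thesis using a fa unfolding admissible_def by auto
qed

lemma Dst_pos: "finite \<alpha> \<Longrightarrow> \<alpha> \<noteq> {} \<Longrightarrow> c \<notin> \<alpha> \<Longrightarrow> 0 < Dst \<alpha> c"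
  using Dst_ex[of \<alpha> c] Dst_nonneg[of \<alpha> c] by force

lemma replace:
  assumes opt: "optimal_n_means n \<alpha>" and b: "b \<in> \<alpha>" and c: "c \<notin> \<alpha>"
   and cond: "\<And>x. x \<in> SS \<Longrightarrow> \<bar>x - c\<bar> \<le> \<bar>x - b\<bar> \<or> (\<exists>b'\<in>\<alpha>. b' \<noteq> b \<and> \<bar>x - b'\<bar> \<le> \<bar>x - b\<bar>)"
   and uv: "u < v" "{u..v} \<subseteq> J m"
   and near: "\<And>x. x \<in> {u<..<v} \<Longrightarrow> \<bar>x - c\<bar> < Dst \<alpha> c / 2"
  shows False
proof -
  have a: "admissible n \<alpha>" using opt by (rule opt_adm)
  note fa = adm_fin[OF a] adm_ne[OF a]
  define \<beta> where "\<beta> = insert c (\<alpha> - {b})"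
  have adm: "admissible n \<beta>" unfolding \<beta>_def by (rule adm_repl[OF a b])
  note fb = adm_fin[OF adm] adm_ne[OF adm]
  show False
  proof (rule improve[OF opt adm _ uv])
    fix x assume x: "x \<in> SS"
    obtain b0 where b0: "b0 \<in> \<alpha>" "Dst \<alpha> x = \<bar>x - b0\<bar>" using Dst_ex[OF fa] by blast
    show "Dst \<beta> x \<le> Dst \<alpha> x"
    proof (cases "b0 = b")
      case False
      hence "b0 \<in> \<beta>" using b0 unfolding \<beta>_def by auto
      thus ?thesis using Dst_le[OF fb] b0 by simp
    next
      case True
      from cond[OF x] show ?thesis
      proof
        assume "\<bar>x - c\<bar> \<le> \<bar>x - b\<bar>"
        moreover have "Dst \<beta> x \<le> \<bar>x - c\<bar>" by (rule Dst_le[OF fb]) (simp add: \<beta>_def)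
        ultimately show ?thesis using b0 True by simp
      next
        assume "\<exists>b'\<in>\<alpha>. b' \<noteq> b \<and> \<bar>x - b'\<bar> \<le> \<bar>x - b\<bar>"
        then obtain b' where "b' \<in> \<alpha>" "b' \<noteq> b" "\<bar>x - b'\<bar> \<le> \<bar>x - b\<bar>" by blast
        moreover hence "Dst \<beta> x \<le> \<bar>x - b'\<bar>" by (intro Dst_le[OF fb]) (simp add: \<beta>_def)
        ultimately show ?thesis using b0 True by simp
      qed
    qed
  next
    fix x assume x: "x \<in> {u<..<v}"
    have "Dst \<beta> x \<le> \<bar>x - c\<bar>" by (rule Dst_le[OF fb]) (simp add: \<beta>_def)
    also have "\<dots> < Dst \<alpha> c / 2" by (rule near[OF x])
    also have "\<dots> < Dst \<alpha> x"
    proof -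
      have "Dst \<alpha> c \<le> Dst \<alpha> x + \<bar>c - x\<bar>" by (rule Dst_lip[OF fa])
      thus ?thesis using near[OF x] by (simp add: abs_minus_commute)
    qed
    finally show "Dst \<beta> x < Dst \<alpha> x" .
  qed
qed

lemma useless:
  assumes opt: "optimal_n_means n \<alpha>" and a: "a \<in> \<alpha>"
   and cond: "\<And>x. x \<in> SS \<Longrightarrow> \<exists>b'\<in>\<alpha>. b' \<noteq> a \<and> \<bar>x - b'\<bar> \<le> \<bar>x - a\<bar>"
  shows False
proof -
  have ad: "admissible n \<alpha>" using opt by (rule opt_adm)
  note fa = adm_fin[OF ad] adm_ne[OF ad]
  have "infinite ({0<..<1/3::real} - \<alpha>)" using fa by (intro Diff_infinite_finite) auto
  from infinite_imp_nonempty[OF this] obtain c where "c \<in> {0<..<1/3} - \<alpha>" by blast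
  hence c: "c \<in> {0<..<1/3}" "c \<notin> \<alpha>" by auto
  define d where "d = Dst \<alpha> c"
  have d: "0 < d" unfolding d_def by (rule Dst_pos[OF fa c(2)])
  define r where "r = min (d/2) (min c (1/3 - c))"
  have r: "0 < r" "r \<le> d/2" "r \<le> c" "r \<le> 1/3 - c" using d c(1) unfolding r_def by (auto simp: min_def)
  show False
  proof (rule replace[OF opt a c(2), where u="c - r" and v="c + r" and m=1])
    show "\<And>x. x \<in> SS \<Longrightarrow> \<bar>x - c\<bar> \<le> \<bar>x - a\<bar> \<or> (\<exists>b'\<in>\<alpha>. b' \<noteq> a \<and> \<bar>x - b'\<bar> \<le> \<bar>x - a\<bar>)"
      using cond by blast
    show "c - r < c + r" using r by simp
    show "{c - r..c + r} \<subseteq> J 1" using r unfolding J_1 by auto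
    fix x assume "x \<in> {c - r<..<c + r}"
    hence "\<bar>x - c\<bar> < r" by auto
    thus "\<bar>x - c\<bar> < Dst \<alpha> c / 2" using r d_def by simp
  qed
qed

lemma int_poly:
  assumes "a \<le> b" "\<And>x. (F has_real_derivative f x) (at x)" "continuous_on {a..b} f"
  shows "(\<integral>x. indicator {a..b} x * f x \<partial>lborel) = F b - F a"
proof -
  have "(\<integral>x. indicator {a..b} x *\<^sub>R f x \<partial>lborel) = F b - F a"
    by (rule integral_FTC_atLeastAtMost[OF assms(1) _ assms(3)])
       (use assms(2) in \<open>auto simp: has_real_derivative_iff_has_vector_derivative intro: has_vector_derivative_at_within\<close>)
  thus ?thesis by simp
qed

lemma int_poly_integrable:
  fixes f :: "real \<Rightarrow> real"
  assumes "continuous_on UNIV f"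
  shows "integrable lborel (\<lambda>x. indicator {a..b} x * (f x::real))"
  using borel_integrable_atLeastAtMost[where f=f and a=a and b=b] assms
  by (simp add: continuous_on_eq_continuous_at mult.commute)


lemma dens_J1: "x \<in> {0..1/3} \<Longrightarrow> dens x = 3/2"
  using dens_J[of x 1] J_1 by simp
lemma dens_J2: "x \<in> {2/3..7/9} \<Longrightarrow> dens x = 9/4"
  using dens_J[of x 2] J_2 by (simp add: power2_eq_square)

lemma UB:
  assumes opt: "optimal_n_means n \<alpha>" and n: "n \<ge> 2"
  shows "Cr \<alpha> \<le> 29/1944"
proof -
  define \<beta> :: "real set" where "\<beta> = {1/6, 5/6}"
  have adm: "admissible n \<beta>" unfolding admissible_def \<beta>_def using n by auto
  note fb = adm_fin[OF adm] adm_ne[OF adm]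
  define h where "h x = indicator {0..1/3} x * (3/2*(x-1/6)^2) + indicator {2/3..7/9} x * (9/4*(x-5/6)^2)
     + (1/36) * (dens x * indicator {8/9..1} x)" for x
  have i1: "integrable lborel (\<lambda>x. indicator {0..1/3::real} x * (3/2*(x-1/6)^2))"
    by (rule int_poly_integrable) (intro continuous_intros)
  have i2: "integrable lborel (\<lambda>x. indicator {2/3..7/9::real} x * (9/4*(x-5/6)^2))"
    by (rule int_poly_integrable) (intro continuous_intros)
  have i3: "integrable lborel (\<lambda>x. dens x * indicator {8/9..1} x)"
    by (rule integrable_densf[where C=1]) (auto simp: indicator_def)
  have pt: "dens x * (Dst \<beta> x)\<^sup>2 \<le> h x" for x
  proof -
    have h0: "0 \<le> h x" unfolding h_def using dens_nonneg[of x] by (auto simp: indicator_def)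
    show ?thesis
    proof (cases "dens x = 0")
      case False
      hence x: "x \<in> SS" using dens_supp by auto
      consider "x \<in> {0..1/3}" | "x \<in> {2/3..7/9}" | "x \<in> {8/9..1}" | "x \<in> {7/9<..<8/9}"
        using x by force
      thus ?thesis
      proof cases
        case 1
        have "Dst \<beta> x \<le> \<bar>x - 1/6\<bar>" by (rule Dst_le[OF fb]) (simp add: \<beta>_def)
        hence "(Dst \<beta> x)\<^sup>2 \<le> \<bar>x - 1/6\<bar>\<^sup>2" using Dst_nonneg[OF fb] by (intro power_mono) auto
        thus ?thesis using 1 unfolding h_def by (auto simp: indicator_def dens_J1[OF 1])
      next
        case 2
        have "Dst \<beta> x \<le> \<bar>x - 5/6\<bar>" by (rule Dst_le[OF fb]) (simp add: \<beta>_def)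
        hence "(Dst \<beta> x)\<^sup>2 \<le> \<bar>x - 5/6\<bar>\<^sup>2" using Dst_nonneg[OF fb] by (intro power_mono) auto
        thus ?thesis using 2 unfolding h_def by (auto simp: indicator_def dens_J2[OF 2])
      next
        case 3
        have "Dst \<beta> x \<le> \<bar>x - 5/6\<bar>" by (rule Dst_le[OF fb]) (simp add: \<beta>_def)
        also have "\<dots> \<le> 1/6" using 3 by auto
        finally have "(Dst \<beta> x)\<^sup>2 \<le> (1/6)\<^sup>2" using Dst_nonneg[OF fb] by (intro power_mono) auto
        hence "dens x * (Dst \<beta> x)\<^sup>2 \<le> dens x * (1/36)" using dens_nonneg[of x]
          by (intro mult_left_mono) (auto simp: power2_eq_square)
        thus ?thesis using 3 unfolding h_def by (auto simp: indicator_def)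
      next
        case 4 thus ?thesis using dens_gap False by auto
      qed
    qed (use h0 in simp)
  qed
  have "Cr \<alpha> \<le> Cr \<beta>" by (rule opt_le[OF opt adm])
  also have "Cr \<beta> \<le> integral\<^sup>L lborel h" unfolding Cr_def[OF fb]
    by (rule integral_mono[OF integrable_cost[OF fb] _ pt]) (unfold h_def, intro Bochner_Integration.integrable_add i1 i2 integrable_mult_right i3)
  also have "integral\<^sup>L lborel h = (\<integral>x. indicator {0..1/3} x * (3/2*(x-1/6)^2) \<partial>lborel) + (\<integral>x. indicator {2/3..7/9} x * (9/4*(x-5/6)^2) \<partial>lborel)
      + (1/36) * (\<integral>x. dens x * indicator {8/9..1} x \<partial>lborel)"
    unfolding h_def using i1 i2 i3 by simp
  also have "(\<integral>x. indicator {0..1/3::real} x * (3/2*(x-1/6)^2) \<partial>lborel) = (\<lambda>x. (x-1/6)^3/2) (1/3) - (\<lambda>x. (x-1/6)^3/2) 0"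
    by (rule int_poly) (auto intro!: derivative_eq_intros continuous_intros simp: power2_eq_square)
  also have "(\<integral>x. indicator {2/3..7/9::real} x * (9/4*(x-5/6)^2) \<partial>lborel) = (\<lambda>x. 3/4*(x-5/6)^3) (7/9) - (\<lambda>x. 3/4*(x-5/6)^3) (2/3)"
    by (rule int_poly) (auto intro!: derivative_eq_intros continuous_intros simp: power2_eq_square)
  also note integral_mtail
  finally show ?thesis by (simp add: power3_eq_cube)
qed

lemma LB_B:
  assumes fa: "finite \<alpha>" "\<alpha> \<noteq> {}" and big: "\<And>b. b \<in> \<alpha> \<Longrightarrow> b > 1/3"
  shows "Cr \<alpha> \<ge> 1/54"
proof -
  have i1: "integrable lborel (\<lambda>x. indicator {0..1/3::real} x * (3/2*(1/3 - x)^2))"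
    by (rule int_poly_integrable) (intro continuous_intros)
  have pt: "indicator {0..1/3} x * (3/2*(1/3 - x)^2) \<le> dens x * (Dst \<alpha> x)\<^sup>2" for x
  proof (cases "x \<in> {0..1/3}")
    case True
    have "1/3 - x \<le> Dst \<alpha> x" by (rule Dst_ge[OF fa]) (use big in force)
    hence "(1/3 - x)^2 \<le> (Dst \<alpha> x)\<^sup>2" using True by (intro power_mono) auto
    moreover have "indicator {0..1/3} x * (3/2*(1/3 - x)^2) = 3/2*(1/3 - x)^2" using True by simp
    moreover have "dens x * (Dst \<alpha> x)\<^sup>2 = 3/2 * (Dst \<alpha> x)\<^sup>2" by (simp add: dens_J1[OF True])
    ultimately show ?thesis by linarith
  qed (use dens_nonneg in simp)
  have e: "(\<integral>x. indicator {0..1/3::real} x * (3/2*(1/3 - x)^2) \<partial>lborel) = (\<lambda>x. (x-1/3)^3/2) (1/3) - (\<lambda>x. (x-1/3)^3/2) 0"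
    by (rule int_poly) (auto intro!: derivative_eq_intros continuous_intros simp: power2_eq_square field_simps)
  have l: "(\<integral>x. indicator {0..1/3} x * (3/2*(1/3 - x)^2) \<partial>lborel) \<le> Cr \<alpha>" unfolding Cr_def[OF fa]
    by (rule integral_mono[OF i1 integrable_cost[OF fa] pt])
  show ?thesis using e l by (simp add: power3_eq_cube)
qed

lemma LB_C:
  assumes fa: "finite \<alpha>" "\<alpha> \<noteq> {}" and small: "\<And>b. b \<in> \<alpha> \<Longrightarrow> b < 2/3"
  shows "Cr \<alpha> \<ge> 25/1296"
proof -
  have iA: "integrable lborel (\<lambda>x. dens x * indicator {8/9..1} x)"
    by (rule integrable_densf[where C=1]) (auto simp: indicator_def)
  have iX: "integrable lborel (\<lambda>x. dens x * (x * indicator {8/9..1} x))"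
    by (rule integrable_densf[where C=1]) (auto simp: indicator_def)
  have pt: "5/9 * (dens x * (x * indicator {8/9..1} x)) - 145/324 * (dens x * indicator {8/9..1} x) \<le> dens x * (Dst \<alpha> x)\<^sup>2" for x
  proof (cases "x \<in> {8/9..1}")
    case True
    have "x - 2/3 \<le> Dst \<alpha> x" by (rule Dst_ge[OF fa]) (use small in force)
    hence "(x - 2/3)^2 \<le> (Dst \<alpha> x)\<^sup>2" using True by (intro power_mono) auto
    moreover have "5/9 * x - 145/324 \<le> (x - 2/3)^2"
    proof -
      have "0 \<le> (x - 2/3 - 5/18)^2" by simp
      thus ?thesis by (simp add: power2_eq_square algebra_simps)
    qed
    ultimately have "5/9 * x - 145/324 \<le> (Dst \<alpha> x)\<^sup>2" by linarith
    hence "dens x * (5/9 * x - 145/324) \<le> dens x * (Dst \<alpha> x)\<^sup>2" using dens_nonneg[of x] by (rule mult_left_mono)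
    thus ?thesis using True by (simp add: algebra_simps)
  qed (use dens_nonneg in simp)
  have "(\<integral>x. 5/9 * (dens x * (x * indicator {8/9..1} x)) - 145/324 * (dens x * indicator {8/9..1} x) \<partial>lborel) \<le> Cr \<alpha>"
    unfolding Cr_def[OF fa] by (rule integral_mono[OF _ integrable_cost[OF fa] pt]) (use iA iX in simp)
  moreover have "(\<integral>x. 5/9 * (dens x * (x * indicator {8/9..1} x)) - 145/324 * (dens x * indicator {8/9..1} x) \<partial>lborel) = 25/1296"
    using iA iX integral_mtail integral_xtail by simp
  ultimately show ?thesis by simp
qed


lemma partB:
  assumes opt: "optimal_n_means n \<alpha>" and n: "n \<ge> 2"
  shows "\<exists>a\<in>\<alpha>. a \<in> {0..1/3}"
proof (rule ccontr)
  assume no: "\<not> (\<exists>a\<in>\<alpha>. a \<in> {0..1/3})"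
  have ad: "admissible n \<alpha>" using opt by (rule opt_adm)
  note fa = adm_fin[OF ad] adm_ne[OF ad]
  show False
  proof (cases "\<exists>l\<in>\<alpha>. l < 0")
    case True
    then obtain l where l: "l \<in> \<alpha>" "l < 0" by blast
    have c: "0 \<notin> \<alpha>" using no by auto
    define d where "d = Dst \<alpha> 0"
    have d: "0 < d" unfolding d_def by (rule Dst_pos[OF fa c])
    define v where "v = min (d/2) (1/3)"
    show False
    proof (rule replace[OF opt l(1) c, where u=0 and v=v and m=1])
      show "\<And>x. x \<in> SS \<Longrightarrow> \<bar>x - 0\<bar> \<le> \<bar>x - l\<bar> \<or> (\<exists>b'\<in>\<alpha>. b' \<noteq> l \<and> \<bar>x - b'\<bar> \<le> \<bar>x - l\<bar>)"
        using l by auto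
      show "0 < v" using d unfolding v_def by simp
      show "{0..v} \<subseteq> J 1" unfolding J_1 v_def by auto
      fix x assume "x \<in> {0<..<v}"
      thus "\<bar>x - 0\<bar> < Dst \<alpha> 0 / 2" unfolding v_def d_def by auto
    qed
  next
    case False
    hence "\<And>b. b \<in> \<alpha> \<Longrightarrow> b > 1/3" using no by force
    hence "Cr \<alpha> \<ge> 1/54" by (rule LB_B[OF fa])
    moreover have "Cr \<alpha> \<le> 29/1944" by (rule UB[OF opt n])
    ultimately show False by simp
  qed
qed

lemma partC:
  assumes opt: "optimal_n_means n \<alpha>" and n: "n \<ge> 2"
  shows "\<exists>a\<in>\<alpha>. a \<in> {2/3..1}"
proof (rule ccontr)
  assume no: "\<not> (\<exists>a\<in>\<alpha>. a \<in> {2/3..1})"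
  have ad: "admissible n \<alpha>" using opt by (rule opt_adm)
  note fa = adm_fin[OF ad] adm_ne[OF ad]
  show False
  proof (cases "\<exists>r\<in>\<alpha>. r > 1")
    case True
    then obtain r where r: "r \<in> \<alpha>" "r > 1" by blast
    have c: "1 \<notin> \<alpha>" using no by auto
    define d where "d = Dst \<alpha> 1"
    have d: "0 < d" unfolding d_def by (rule Dst_pos[OF fa c])
    obtain k where k: "(1/3::real)^k < d/2" using real_arch_pow_inv[of "d/2" "1/3"] d by auto
    have k': "1/3^k < d/2" using k by (simp add: power_divide)
    have uv: "1 - 1/3^k < (1 - 2/3^(Suc k)::real)" by (simp add: field_simps)
    show False
    proof (rule replace[OF opt r(1) c, where u="1 - 1/3^k" and v="1 - 2/3^(Suc k)" and m="Suc k"])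
      show "\<And>x. x \<in> SS \<Longrightarrow> \<bar>x - 1\<bar> \<le> \<bar>x - r\<bar> \<or> (\<exists>b'\<in>\<alpha>. b' \<noteq> r \<and> \<bar>x - b'\<bar> \<le> \<bar>x - r\<bar>)"
        using r by auto
      show "1 - 1/3^k < (1 - 2/3^(Suc k)::real)" by (rule uv)
      show "{1 - 1/3^k..1 - 2/3^(Suc k)} \<subseteq> J (Suc k)" by (simp add: J_Suc)
      fix x assume x: "x \<in> {1 - 1/3^k<..<1 - 2/3^(Suc k)::real}"
      have "(0::real) < 2/3^(Suc k)" by simp
      hence "\<bar>x - 1\<bar> < 1/3^k" using x by auto
      thus "\<bar>x - 1\<bar> < Dst \<alpha> 1 / 2" using k' unfolding d_def by simp
    qed
  next
    case False
    hence "\<And>b. b \<in> \<alpha> \<Longrightarrow> b < 2/3" using no by force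
    hence "Cr \<alpha> \<ge> 25/1296" by (rule LB_C[OF fa])
    moreover have "Cr \<alpha> \<le> 29/1944" by (rule UB[OF opt n])
    ultimately show False by simp
  qed
qed


lemma voronoi_meas:
  assumes "finite \<alpha>" "\<alpha> \<noteq> {}"
  shows "voronoi b \<alpha> \<in> sets borel"
  unfolding voronoi_Dst using Dst_meas[OF assms] by measurable

lemma moveP:
  assumes opt: "optimal_n_means n \<alpha>" and p: "p \<in> \<alpha>" and a: "a \<in> \<alpha>" "p < a"
    and p0: "0 \<le> p" and u13: "(p + a)/2 < 1/3"
    and nbr: "\<And>b. b \<in> \<alpha> \<Longrightarrow> b < a \<Longrightarrow> b \<le> p"
    and small: "p < (p + a)/4"
  shows False
proof -
  have ad: "admissible n \<alpha>" using opt by (rule opt_adm)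
  note fa = adm_fin[OF ad] adm_ne[OF ad]
  define u where "u = (p + a)/2"
  define V where "V = voronoi p \<alpha>"
  have Vm[measurable]: "V \<in> sets borel" unfolding V_def by (rule voronoi_meas[OF fa])
  have Vin: "x \<in> V" if "p < x" "x \<le> u" for x
  proof -
    have "\<bar>x - p\<bar> \<le> Dst \<alpha> x"
    proof (rule Dst_ge[OF fa])
      fix b assume b: "b \<in> \<alpha>"
      show "\<bar>x - p\<bar> \<le> \<bar>x - b\<bar>"
      proof (cases "b < a")
        case True thus ?thesis using nbr[OF b True] that by auto
      next
        case False thus ?thesis using that unfolding u_def by auto
      qed
    qed
    moreover have "Dst \<alpha> x \<le> \<bar>x - p\<bar>" by (rule Dst_le[OF fa p])
    ultimately show ?thesis unfolding V_def voronoi_Dst by simp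
  qed
  have Vout: "x \<notin> V" if "u < x" for x
  proof -
    have "Dst \<alpha> x \<le> \<bar>x - a\<bar>" by (rule Dst_le[OF fa a(1)])
    also have "\<dots> < \<bar>x - p\<bar>" using that a(2) unfolding u_def by auto
    finally show ?thesis unfolding V_def voronoi_Dst by auto
  qed
  have u0: "0 \<le> u" "u < 1/3" using p0 a u13 unfolding u_def by auto
  define f where "f x = dens x * ((x - p) * indicator V x)" for x
  define g where "g x = indicator {0..u} x * (3/2 * (x - p))" for x
  have intf: "integrable lborel f" unfolding f_def
    by (rule integrable_densf[where C="1 + \<bar>p\<bar>"]) (auto simp: indicator_def)
  have intg: "integrable lborel g" unfolding g_def
    by (rule int_poly_integrable) (intro continuous_intros)
  have pt: "g x \<le> f x" for x
  proof (cases "x \<in> {0..u}")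
    case True
    hence dx: "dens x = 3/2" using u0 by (intro dens_J1) auto
    show ?thesis
    proof (cases "x \<le> p")
      case True
      thus ?thesis using \<open>x \<in> {0..u}\<close> unfolding f_def g_def dx by (auto simp: indicator_def)
    next
      case False
      thus ?thesis using \<open>x \<in> {0..u}\<close> Vin[of x] unfolding f_def g_def dx by (auto simp: indicator_def)
    qed
  next
    case False
    show ?thesis
    proof (cases "x < 0")
      case True
      hence "dens x = 0" using dens_supp by force
      thus ?thesis using False unfolding f_def g_def by simp
    next
      case xn: False
      hence "u < x" using False by auto
      thus ?thesis using Vout[of x] False unfolding f_def g_def by simp
    qed
  qed
  have "integral\<^sup>L lborel g = (\<lambda>x. 3/4 * (x - p)^2) u - (\<lambda>x. 3/4 * (x - p)^2) 0"
    unfolding g_def by (rule int_poly) (use u0 in \<open>auto intro!: derivative_eq_intros continuous_intros\<close>)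
  also have "\<dots> > 0"
  proof -
    have "p < u - p" using small unfolding u_def by simp
    hence "p^2 < (u - p)^2" using p0 by (intro power_strict_mono) auto
    thus ?thesis by simp
  qed
  finally have "0 < integral\<^sup>L lborel g" .
  also have "integral\<^sup>L lborel g \<le> integral\<^sup>L lborel f" by (rule integral_mono[OF intg intf pt])
  finally have "integral\<^sup>L lborel f \<noteq> 0" by simp
  thus False using move[OF opt p] unfolding f_def V_def by blast
qed


lemma moveQ:
  assumes opt: "optimal_n_means n \<alpha>" and q: "q \<in> \<alpha>" and a: "a \<in> \<alpha>" "a < q"
    and q1: "q \<le> 1" and w1: "2/3 < (a + q)/2" and w2: "(a + q)/2 \<le> 3/4" and a12: "a \<le> 1/2"
    and nbr: "\<And>b. b \<in> \<alpha> \<Longrightarrow> b > a \<Longrightarrow> q \<le> b"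
  shows False
proof -
  have ad: "admissible n \<alpha>" using opt by (rule opt_adm)
  note fa = adm_fin[OF ad] adm_ne[OF ad]
  define w where "w = (a + q)/2"
  define V where "V = voronoi q \<alpha>"
  have Vm[measurable]: "V \<in> sets borel" unfolding V_def by (rule voronoi_meas[OF fa])
  have Vin: "x \<in> V" if "w \<le> x" "x \<le> q" for x
  proof -
    have "\<bar>x - q\<bar> \<le> Dst \<alpha> x"
    proof (rule Dst_ge[OF fa])
      fix b assume b: "b \<in> \<alpha>"
      show "\<bar>x - q\<bar> \<le> \<bar>x - b\<bar>"
      proof (cases "b > a")
        case True thus ?thesis using nbr[OF b True] that by auto
      next
        case False thus ?thesis using that unfolding w_def by auto
      qed
    qed
    moreover have "Dst \<alpha> x \<le> \<bar>x - q\<bar>" by (rule Dst_le[OF fa q])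
    ultimately show ?thesis unfolding V_def voronoi_Dst by simp
  qed
  have Vout: "x \<notin> V" if "x < w" for x
  proof -
    have "Dst \<alpha> x \<le> \<bar>x - a\<bar>" by (rule Dst_le[OF fa a(1)])
    also have "\<dots> < \<bar>x - q\<bar>" using that a(2) unfolding w_def by auto
    finally show ?thesis unfolding V_def voronoi_Dst by auto
  qed
  have "2*w = a + q" unfolding w_def by simp
  hence wq0: "2*w - 1/2 \<le> q" using a12 by linarith
  have wq: "2/3 < w" "w \<le> 3/4" "2*w - 1/2 \<le> q" using w1 w2 wq0 unfolding w_def by auto
  define f where "f x = dens x * ((x - q) * indicator V x)" for x
  define h1 where "h1 x = indicator {w..7/9} x * (9/4 * (x - q))" for x
  define h where "h x = h1 x + (dens x * (x * indicator {8/9..1} x) - q * (dens x * indicator {8/9..1} x))" for x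
  have intf: "integrable lborel f" unfolding f_def
    by (rule integrable_densf[where C="1 + \<bar>q\<bar>"]) (auto simp: indicator_def)
  have i1: "integrable lborel h1" unfolding h1_def
    by (rule int_poly_integrable) (intro continuous_intros)
  have iA: "integrable lborel (\<lambda>x. dens x * indicator {8/9..1} x)"
    by (rule integrable_densf[where C=1]) (auto simp: indicator_def)
  have iX: "integrable lborel (\<lambda>x. dens x * (x * indicator {8/9..1} x))"
    by (rule integrable_densf[where C=1]) (auto simp: indicator_def)
  have inth: "integrable lborel h" unfolding h_def using i1 iA iX by simp
  have pt: "f x \<le> h x" for x
  proof -
    consider "x < w" | "w \<le> x" "x \<le> 7/9" | "7/9 < x" "x < 8/9" | "8/9 \<le> x" "x \<le> 1" | "1 < x" by linarith
    thus ?thesis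
    proof cases
      case 1
      thus ?thesis using Vout[OF 1] wq unfolding f_def h_def h1_def by (auto simp: indicator_def)
    next
      case 2
      have dx: "dens x = 9/4" using 2 wq by (intro dens_J2) auto
      have "x \<le> q" using 2 wq by linarith
      thus ?thesis using 2 Vin[of x] unfolding f_def h_def h1_def dx by (auto simp: indicator_def)
    next
      case 3
      hence "dens x = 0" by (intro dens_gap) auto
      thus ?thesis using 3 wq unfolding f_def h_def h1_def by (auto simp: indicator_def)
    next
      case 4
      have h: "h x = dens x * (x - q)" using 4 wq unfolding h_def h1_def by (auto simp: indicator_def algebra_simps)
      show ?thesis
      proof (cases "x \<le> q")
        case True
        hence "x \<in> V" using 4 wq by (intro Vin) auto
        thus ?thesis unfolding f_def h by simp
      next
        case False
        have "(x - q) * indicator V x \<le> x - q" using False by (auto simp: indicator_def)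
        thus ?thesis unfolding f_def h using dens_nonneg[of x] by (rule mult_left_mono)
      qed
    next
      case 5
      hence "dens x = 0" using dens_supp by force
      thus ?thesis using 5 wq unfolding f_def h_def h1_def by (auto simp: indicator_def)
    qed
  qed
  have "integral\<^sup>L lborel f \<le> integral\<^sup>L lborel h" by (rule integral_mono[OF intf inth pt])
  also have "integral\<^sup>L lborel h = integral\<^sup>L lborel h1 + (17/72 - q * (1/4))"
    unfolding h_def using i1 iA iX by (simp add: integral_xtail integral_mtail)
  also have "integral\<^sup>L lborel h1 = (\<lambda>x. 9/8 * (x - q)^2) (7/9) - (\<lambda>x. 9/8 * (x - q)^2) w"
    unfolding h1_def by (rule int_poly) (use wq in \<open>auto intro!: derivative_eq_intros continuous_intros\<close>)
  also have "(\<lambda>x. 9/8 * (x - q)^2) (7/9) - (\<lambda>x. 9/8 * (x - q)^2) w + (17/72 - q * (1/4)) < 0"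
  proof -
    have e: "(\<lambda>x. 9/8 * (x - q)^2) (7/9) - (\<lambda>x. 9/8 * (x - q)^2) w + (17/72 - q * (1/4))
       = 9/8 * (7/9 - w) * (7/9 + w - 2*q) + 17/72 - q/4"
      by (simp add: power2_eq_square field_simps)
    have s1: "0 \<le> (q - (2*w - 1/2)) * (9/4 * (7/9 - w) + 1/4)" using wq by (intro mult_nonneg_nonneg) auto
    have s2: "27/8 * (w - 2/3) * (w - 23/27) < 0" using wq by (intro mult_pos_neg) auto
    have "9/8 * (7/9 - w) * (7/9 + w - 2*q) + 17/72 - q/4 = 27/8 * (w - 2/3) * (w - 23/27) - (q - (2*w - 1/2)) * (9/4 * (7/9 - w) + 1/4)"
      by (simp add: field_simps)
    thus ?thesis unfolding e using s1 s2 by linarith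
  qed
  finally have "integral\<^sup>L lborel f \<noteq> 0" by simp
  thus False using move[OF opt q] unfolding f_def V_def by blast
qed


lemma partD:
  assumes opt: "optimal_n_means n \<alpha>" and n: "n \<ge> 2"
  shows "\<alpha> \<inter> {1/3<..<2/3} = {}"
proof (rule ccontr)
  assume "\<alpha> \<inter> {1/3<..<2/3} \<noteq> {}"
  then obtain a where a: "a \<in> \<alpha>" "1/3 < a" "a < 2/3" by auto
  have ad: "admissible n \<alpha>" using opt by (rule opt_adm)
  note fa = adm_fin[OF ad] adm_ne[OF ad]
  obtain c0 where c0: "c0 \<in> \<alpha>" "c0 \<in> {0..1/3}" using partB[OF opt n] by blast
  obtain e0 where e0: "e0 \<in> \<alpha>" "e0 \<in> {2/3..1}" using partC[OF opt n] by blast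
  show False
  proof (cases "\<forall>x\<in>{2/3..1}. \<exists>b\<in>\<alpha>. b \<noteq> a \<and> \<bar>x - b\<bar> \<le> \<bar>x - a\<bar>")
    case C1: True
    show False
    proof (cases "1/3 \<in> \<alpha>")
      case True
      show False
      proof (rule useless[OF opt a(1)])
        fix x :: real assume x: "x \<in> SS"
        show "\<exists>b'\<in>\<alpha>. b' \<noteq> a \<and> \<bar>x - b'\<bar> \<le> \<bar>x - a\<bar>"
        proof (cases "x \<le> 1/3")
          case True
          thus ?thesis using \<open>1/3 \<in> \<alpha>\<close> a x by (intro bexI[of _ "1/3"]) auto
        next
          case False
          thus ?thesis using C1 x by auto
        qed
      qed
    next
      case False
      define d where "d = Dst \<alpha> (1/3)"
      have d: "0 < d" unfolding d_def by (rule Dst_pos[OF fa False])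
      define r where "r = min (d/2) (1/3)"
      have r: "0 < r" "r \<le> d/2" "r \<le> 1/3" using d unfolding r_def by auto
      show False
      proof (rule replace[OF opt a(1) False, where u="1/3 - r" and v="1/3" and m=1])
        fix x :: real assume x: "x \<in> SS"
        show "\<bar>x - 1/3\<bar> \<le> \<bar>x - a\<bar> \<or> (\<exists>b'\<in>\<alpha>. b' \<noteq> a \<and> \<bar>x - b'\<bar> \<le> \<bar>x - a\<bar>)"
        proof (cases "x \<le> 1/3")
          case True thus ?thesis using a x by auto
        next
          case False thus ?thesis using C1 x by auto
        qed
      next
        show "1/3 - r < 1/3" using r by simp
        show "{1/3 - r..1/3} \<subseteq> J 1" using r unfolding J_1 by auto
        fix x assume "x \<in> {1/3 - r<..<1/3::real}"
        hence "\<bar>x - 1/3\<bar> < r" by auto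
        thus "\<bar>x - 1/3\<bar> < Dst \<alpha> (1/3) / 2" using r unfolding d_def by simp
      qed
    qed
  next
    case nC1: False
    then obtain x2 where x2a: "x2 \<in> {2/3..1}" and x2b: "\<not> (\<exists>b\<in>\<alpha>. b \<noteq> a \<and> \<bar>x2 - b\<bar> \<le> \<bar>x2 - a\<bar>)"
      by blast
    have x2: "x2 \<in> {2/3..1}" "\<And>b. b \<in> \<alpha> \<Longrightarrow> b \<noteq> a \<Longrightarrow> \<bar>x2 - a\<bar> < \<bar>x2 - b\<bar>"
      using x2a x2b by force+
    show False
    proof (cases "\<forall>x\<in>{0..1/3}. \<exists>b\<in>\<alpha>. b \<noteq> a \<and> \<bar>x - b\<bar> \<le> \<bar>x - a\<bar>")
      case C2: True
      show False
      proof (cases "2/3 \<in> \<alpha>")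
        case True
        show False
        proof (rule useless[OF opt a(1)])
          fix x :: real assume x: "x \<in> SS"
          show "\<exists>b'\<in>\<alpha>. b' \<noteq> a \<and> \<bar>x - b'\<bar> \<le> \<bar>x - a\<bar>"
          proof (cases "x \<le> 1/3")
            case True
            thus ?thesis using C2 x by auto
          next
            case False
            thus ?thesis using \<open>2/3 \<in> \<alpha>\<close> a x by (intro bexI[of _ "2/3"]) auto
          qed
        qed
      next
        case False
        define d where "d = Dst \<alpha> (2/3)"
        have d: "0 < d" unfolding d_def by (rule Dst_pos[OF fa False])
        define r where "r = min (d/2) (1/9)"
        have r: "0 < r" "r \<le> d/2" "r \<le> 1/9" using d unfolding r_def by auto
        show False
        proof (rule replace[OF opt a(1) False, where u="2/3" and v="2/3 + r" and m=2])
          fix x :: real assume x: "x \<in> SS"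
          show "\<bar>x - 2/3\<bar> \<le> \<bar>x - a\<bar> \<or> (\<exists>b'\<in>\<alpha>. b' \<noteq> a \<and> \<bar>x - b'\<bar> \<le> \<bar>x - a\<bar>)"
          proof (cases "x \<le> 1/3")
            case True thus ?thesis using C2 x by auto
          next
            case False thus ?thesis using a x by auto
          qed
        next
          show "2/3 < 2/3 + r" using r by simp
          show "{2/3..2/3 + r} \<subseteq> J 2" using r unfolding J_2 by auto
          fix x assume "x \<in> {2/3<..<2/3 + r::real}"
          hence "\<bar>x - 2/3\<bar> < r" by auto
          thus "\<bar>x - 2/3\<bar> < Dst \<alpha> (2/3) / 2" using r unfolding d_def by simp
        qed
      qed
    next
      case False
      then obtain x1 where x1a: "x1 \<in> {0..1/3}" and x1b: "\<not> (\<exists>b\<in>\<alpha>. b \<noteq> a \<and> \<bar>x1 - b\<bar> \<le> \<bar>x1 - a\<bar>)"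
        by blast
      have x1: "x1 \<in> {0..1/3}" "\<And>b. b \<in> \<alpha> \<Longrightarrow> b \<noteq> a \<Longrightarrow> \<bar>x1 - a\<bar> < \<bar>x1 - b\<bar>"
        using x1a x1b by force+
      have c0x1: "c0 < x1"
      proof (rule ccontr)
        assume "\<not> c0 < x1"
        moreover have "c0 \<noteq> a" using c0 a by auto
        ultimately show False using x1(2)[OF c0(1)] c0 a by auto
      qed
      define L where "L = {b\<in>\<alpha>. b < a}"
      have L: "finite L" "c0 \<in> L" unfolding L_def using fa c0 a by auto
      define p where "p = Max L"
      have p: "p \<in> \<alpha>" "p < a" using Max_in[OF L(1)] L(2) unfolding p_def L_def by auto
      have pc0: "c0 \<le> p" unfolding p_def by (rule Max_ge[OF L])
      have nbrp: "b \<le> p" if "b \<in> \<alpha>" "b < a" for b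
        unfolding p_def using that by (intro Max_ge[OF L(1)]) (simp add: L_def)
      have px1: "p < x1"
      proof (rule ccontr)
        assume "\<not> p < x1"
        thus False using x1(2)[OF p(1)] p by auto
      qed
      have ux1: "(p + a)/2 < x1" using x1(2)[OF p(1)] p px1 x1(1) a by auto
      define R where "R = {b\<in>\<alpha>. b > a}"
      have R: "finite R" "e0 \<in> R" unfolding R_def using fa e0 a by auto
      define q where "q = Min R"
      have q: "q \<in> \<alpha>" "a < q" using Min_in[OF R(1)] R(2) unfolding q_def R_def by auto
      have qe0: "q \<le> e0" unfolding q_def by (rule Min_le[OF R])
      have nbrq: "q \<le> b" if "b \<in> \<alpha>" "b > a" for b
        unfolding q_def using that by (intro Min_le[OF R(1)]) (simp add: R_def)
      have qx2: "x2 < q"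
      proof (rule ccontr)
        assume "\<not> x2 < q"
        thus False using x2(2)[OF q(1)] q by auto
      qed
      have wx2: "x2 < (a + q)/2" using x2(2)[OF q(1)] q qx2 x2(1) a by auto
      show False
      proof (cases "p < (p + a)/4")
        case True
        show False
          by (rule moveP[OF opt p(1) a(1) p(2) _ _ nbrp True]) (use pc0 c0 ux1 x1 in auto)
      next
        case False
        hence "a \<le> 1/2" using ux1 x1(1) by auto
        show False
          by (rule moveQ[OF opt q(1) a(1) q(2) _ _ _ \<open>a \<le> 1/2\<close> nbrq]) (use qe0 e0 wx2 x2 \<open>a \<le> 1/2\<close> in auto)
      qed
    qed
  qed
qed


lemma part3a:
  assumes opt: "optimal_n_means n \<alpha>" and n: "n \<ge> 2"
    and a: "a \<in> \<alpha>" "a \<in> J 1" and x: "x \<in> voronoi a \<alpha>" "x \<in> {2/3..1}"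
  shows False
proof -
  have ad: "admissible n \<alpha>" using opt by (rule opt_adm)
  note fa = adm_fin[OF ad] adm_ne[OF ad]
  obtain e0 where e0: "e0 \<in> \<alpha>" "e0 \<in> {2/3..1}" using partC[OF opt n] by blast
  have a1: "0 \<le> a" "a \<le> 1/3" using a(2) unfolding J_1 by auto
  have xa: "\<bar>x - a\<bar> = Dst \<alpha> x" using x(1) unfolding voronoi_Dst by simp
  have "Dst \<alpha> x \<le> \<bar>x - e0\<bar>" by (rule Dst_le[OF fa e0(1)])
  also have "\<dots> \<le> 1/3" using x(2) e0(2) unfolding abs_le_iff by auto
  finally have "x - a \<le> 1/3" using xa x(2) a1 by auto
  hence ax: "a = 1/3" "x = 2/3" using x(2) a1 by auto
  have gap: "b \<le> 1/3 \<or> 1 \<le> b" if b: "b \<in> \<alpha>" for b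
  proof -
    have "Dst \<alpha> x \<le> \<bar>x - b\<bar>" by (rule Dst_le[OF fa b])
    thus ?thesis using xa ax by auto
  qed
  have one: "1 \<in> \<alpha>"
  proof -
    have "e0 = 1" using gap[OF e0(1)] e0(2) by auto
    thus ?thesis using e0 by simp
  qed
  define V where "V = voronoi 1 \<alpha>"
  have Vm[measurable]: "V \<in> sets borel" unfolding V_def by (rule voronoi_meas[OF fa])
  have Vin: "y \<in> V" if "y \<in> {2/3..7/9}" for y
  proof -
    have "\<bar>y - 1\<bar> \<le> Dst \<alpha> y"
    proof (rule Dst_ge[OF fa])
      fix b assume b: "b \<in> \<alpha>"
      show "\<bar>y - 1\<bar> \<le> \<bar>y - b\<bar>" using gap[OF b] that by auto
    qed
    moreover have "Dst \<alpha> y \<le> \<bar>y - 1\<bar>" by (rule Dst_le[OF fa one])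
    ultimately show ?thesis unfolding V_def voronoi_Dst by simp
  qed
  define f where "f y = dens y * ((y - 1) * indicator V y)" for y
  define g where "g y = indicator {2/3..7/9} y * (9/4 * (y - 1))" for y :: real
  have intf: "integrable lborel f" unfolding f_def
    by (rule integrable_densf[where C=1]) (auto simp: indicator_def)
  have intg: "integrable lborel g" unfolding g_def
    by (rule int_poly_integrable) (intro continuous_intros)
  have pt: "f y \<le> g y" for y
  proof (cases "y \<in> {2/3..7/9}")
    case True
    thus ?thesis using Vin[OF True] unfolding f_def g_def by (simp add: dens_J2)
  next
    case False
    show ?thesis
    proof (cases "dens y = 0")
      case False
      hence "y \<le> 1" using dens_supp by force
      hence "(y - 1) * indicator V y \<le> 0" by (auto simp: indicator_def)
      hence "f y \<le> 0" unfolding f_def using dens_nonneg[of y] by (simp add: mult_nonneg_nonpos)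
      thus ?thesis using \<open>y \<notin> {2/3..7/9}\<close> unfolding g_def by simp
    qed (use \<open>y \<notin> {2/3..7/9}\<close> in \<open>simp add: f_def g_def\<close>)
  qed
  have "integral\<^sup>L lborel f \<le> integral\<^sup>L lborel g" by (rule integral_mono[OF intf intg pt])
  also have "integral\<^sup>L lborel g = (\<lambda>y. 9/8 * (y - 1)^2) (7/9) - (\<lambda>y. 9/8 * (y - 1)^2) (2/3)"
    unfolding g_def by (rule int_poly) (auto intro!: derivative_eq_intros continuous_intros)
  also have "\<dots> < 0" by (simp add: power2_eq_square)
  finally have "integral\<^sup>L lborel f \<noteq> 0" by simp
  thus False using move[OF opt one] unfolding f_def V_def by blast
qed

lemma part3b:
  assumes opt: "optimal_n_means n \<alpha>" and n: "n \<ge> 2"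
    and a: "a \<in> \<alpha>" "a \<in> {2/3..1}" and x: "x \<in> voronoi a \<alpha>" "x \<in> J 1"
  shows False
proof -
  have ad: "admissible n \<alpha>" using opt by (rule opt_adm)
  note fa = adm_fin[OF ad] adm_ne[OF ad]
  obtain c0 where c0: "c0 \<in> \<alpha>" "c0 \<in> {0..1/3}" using partB[OF opt n] by blast
  have x1: "0 \<le> x" "x \<le> 1/3" using x(2) unfolding J_1 by auto
  have xa: "\<bar>x - a\<bar> = Dst \<alpha> x" using x(1) unfolding voronoi_Dst by simp
  have "Dst \<alpha> x \<le> \<bar>x - c0\<bar>" by (rule Dst_le[OF fa c0(1)])
  also have "\<dots> \<le> 1/3" using x1 c0(2) unfolding abs_le_iff by auto
  finally have "a - x \<le> 1/3" using xa a(2) x1 by auto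
  hence ax: "a = 2/3" "x = 1/3" using a(2) x1 by auto
  have gap: "b \<le> 0 \<or> 2/3 \<le> b" if b: "b \<in> \<alpha>" for b
  proof -
    have "Dst \<alpha> x \<le> \<bar>x - b\<bar>" by (rule Dst_le[OF fa b])
    thus ?thesis using xa ax by auto
  qed
  have zero: "0 \<in> \<alpha>"
  proof -
    have "c0 = 0" using gap[OF c0(1)] c0(2) by auto
    thus ?thesis using c0 by simp
  qed
  define V where "V = voronoi 0 \<alpha>"
  have Vm[measurable]: "V \<in> sets borel" unfolding V_def by (rule voronoi_meas[OF fa])
  have Vin: "y \<in> V" if "y \<in> {0..1/3}" for y
  proof -
    have "\<bar>y - 0\<bar> \<le> Dst \<alpha> y"
    proof (rule Dst_ge[OF fa])
      fix b assume b: "b \<in> \<alpha>"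
      show "\<bar>y - 0\<bar> \<le> \<bar>y - b\<bar>" using gap[OF b] that by auto
    qed
    moreover have "Dst \<alpha> y \<le> \<bar>y - 0\<bar>" by (rule Dst_le[OF fa zero])
    ultimately show ?thesis unfolding V_def voronoi_Dst by simp
  qed
  define f where "f y = dens y * ((y - 0) * indicator V y)" for y
  define g where "g y = indicator {0..1/3} y * (3/2 * y)" for y :: real
  have intf: "integrable lborel f" unfolding f_def
    by (rule integrable_densf[where C=1]) (auto simp: indicator_def)
  have intg: "integrable lborel g" unfolding g_def
    by (rule int_poly_integrable) (intro continuous_intros)
  have pt: "g y \<le> f y" for y
  proof (cases "y \<in> {0..1/3}")
    case True
    thus ?thesis using Vin[OF True] unfolding f_def g_def by (simp add: dens_J1)
  next
    case False
    show ?thesis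
    proof (cases "dens y = 0")
      case False
      hence "0 \<le> y" using dens_supp by force
      hence "0 \<le> (y - 0) * indicator V y" by (auto simp: indicator_def)
      hence "0 \<le> f y" unfolding f_def using dens_nonneg[of y] by simp
      thus ?thesis using \<open>y \<notin> {0..1/3}\<close> unfolding g_def by simp
    qed (use \<open>y \<notin> {0..1/3}\<close> in \<open>simp add: f_def g_def\<close>)
  qed
  have "(\<lambda>y. 3/4 * y^2) (1/3) - (\<lambda>y. 3/4 * y^2) 0 = integral\<^sup>L lborel g"
    unfolding g_def by (rule int_poly[symmetric]) (auto intro!: derivative_eq_intros continuous_intros)
  also have "integral\<^sup>L lborel g \<le> integral\<^sup>L lborel f" by (rule integral_mono[OF intg intf pt])
  finally have "integral\<^sup>L lborel f \<noteq> 0" by (simp add: power2_eq_square)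
  thus False using move[OF opt zero] unfolding f_def V_def by blast
qed

theorem proposition4p3:
  fixes n :: nat and \<alpha> :: "real set"
  assumes "n \<ge> 2" and "optimal_n_means n \<alpha>"
  shows "(\<alpha> \<inter> J 1 \<noteq> {} \<and> \<alpha> \<inter> {2/3..1} \<noteq> {}) \<and>
         \<alpha> \<inter> {1/3<..<2/3} = {} \<and>
         (\<forall>a\<in>\<alpha> \<inter> J 1. voronoi a \<alpha> \<inter> {2/3..1} = {}) \<and>
         (\<forall>a\<in>\<alpha> \<inter> {2/3..1}. voronoi a \<alpha> \<inter> J 1 = {})"
proof (intro conjI ballI)
  show "\<alpha> \<inter> J 1 \<noteq> {}" using partB[OF assms(2,1)] unfolding J_1 by blast
  show "\<alpha> \<inter> {2/3..1} \<noteq> {}" using partC[OF assms(2,1)] by blast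
  show "\<alpha> \<inter> {1/3<..<2/3} = {}" by (rule partD[OF assms(2,1)])
  fix a
  show "a \<in> \<alpha> \<inter> J 1 \<Longrightarrow> voronoi a \<alpha> \<inter> {2/3..1} = {}"
    using part3a[OF assms(2,1)] by blast
  show "a \<in> \<alpha> \<inter> {2/3..1} \<Longrightarrow> voronoi a \<alpha> \<inter> J 1 = {}"
    using part3b[OF assms(2,1)] by blast
qed


end
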